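(* Let $\mathbf{u}=(u_n)_{n\in\mathbb{N}}$ be a strictly increasing sequence of positive integers with $Q_\mathbf{u}<\infty$. Then the topology $\tau_\mathbf{u}$ on $\mathbb{T}$ is discrete; more precisely, $B^{\varrho_\mathbf{u}}_{1/(2Q_\mathbf{u})}(0)=\{0\}$ in $\mathbb{T}$.
   Context: $\mathbb{T}=\mathbb{R}/\mathbb{Z}$, $\|x\|$ is the distance from $x$ to the nearest integer and $d(x,y)=\|x-y\|$. The ratios of $\mathbf{u}$ are $q_0=u_0$ and $q_n=u_n/u_{n-1}$ for $n>0$; $Q_\mathbf{u}=\sup_n q_n$. For $x,y\in\mathbb{T}$, $\varrho_\mathbf{u}(x,y)=\sup_n\max\{d(x,y),d(u_nx,u_ny)\}$; $\tau_\mathbf{u}$ is the topology on $\mathbb{T}$ induced by this metric and $B^{\varrho_\mathbf{u}}_\varepsilon(0)=\{x\in\mathbb{T}:\varrho_\mathbf{u}(x,0)<\varepsilon\}$. *)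

theory Defs
  imports Complex_Main
begin

text \<open>Points of the circle T = R/Z are represented by real numbers; two reals
  represent the same point of T iff their difference is an integer.\<close>

definition tnorm :: "real \<Rightarrow> real" where
  "tnorm x = \<bar>x - of_int (round x)\<bar>"

definition tdist :: "real \<Rightarrow> real \<Rightarrow> real" where
  "tdist x y = tnorm (x - y)"

definition ratio :: "(nat \<Rightarrow> nat) \<Rightarrow> nat \<Rightarrow> real" where
  "ratio u n = (if n = 0 then real (u 0) else real (u n) / real (u (n - 1)))"

definition Qsup :: "(nat \<Rightarrow> nat) \<Rightarrow> real" where
  "Qsup u = (SUP n. ratio u n)"

definition rho :: "(nat \<Rightarrow> nat) \<Rightarrow> real \<Rightarrow> real \<Rightarrow> real" where
  "rho u x y = (SUP n. max (tdist x y) (tdist (real (u n) * x) (real (u n) * y)))"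

end

theory Submission
  imports Defs
begin

lemma tnorm_le: "tnorm z \<le> 1/2"
  unfolding tnorm_def using of_int_round_abs_le[of z] by linarith

lemma tnorm_le2: "tnorm z * 2 \<le> 1"
  using tnorm_le[of z] by linarith

lemma tnorm_nonneg: "tnorm z \<ge> 0"
  unfolding tnorm_def by simp

lemma tnorm_min: "tnorm z \<le> \<bar>z - of_int m\<bar>"
  unfolding tnorm_def by (rule round_diff_minimal)

lemma tnorm_neg: "tnorm (-z) = tnorm z"
proof -
  have "tnorm (-z) \<le> tnorm z"
    using tnorm_min[of "-z" "- round z"] unfolding tnorm_def by simp
  moreover have "tnorm z \<le> tnorm (-z)"
    using tnorm_min[of "z" "- round (-z)"] unfolding tnorm_def by simp
  ultimately show ?thesis by simp
qed

lemma tnorm_int: "z \<in> \<int> \<Longrightarrow> tnorm z = 0"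
  unfolding tnorm_def by (auto elim: Ints_cases)

lemma tnorm_small: "\<bar>z - of_int m\<bar> < 1/2 \<Longrightarrow> tnorm z = \<bar>z - of_int m\<bar>"
  unfolding tnorm_def using round_unique'[of z m] by simp

lemma rho0: "rho u x 0 = (SUP n. max (tnorm x) (tnorm (real (u n) * x)))"
  unfolding rho_def tdist_def by simp

lemma rho_shift: "rho u x y = rho u (x - y) 0"
  unfolding rho_def tdist_def by (simp add: right_diff_distrib)

lemma rho_sym: "rho u x y = rho u (y - x) 0"
proof -
  have "rho u x y = rho u (x - y) 0" by (rule rho_shift)
  also have "\<dots> = rho u (y - x) 0"
  proof -
    have e1: "tnorm (x - y) = tnorm (y - x)"
      using tnorm_neg[of "y - x"] by simp
    have e2: "tnorm (real (u n) * (x - y)) = tnorm (real (u n) * (y - x))" for n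
    proof -
      have "real (u n) * (x - y) = - (real (u n) * (y - x))" by (simp add: algebra_simps)
      thus ?thesis using tnorm_neg[of "real (u n) * (y - x)"] by simp
    qed
    show ?thesis unfolding rho0 e1 e2 ..
  qed
  finally show ?thesis .
qed

lemma rho_ge: "max (tnorm x) (tnorm (real (u n) * x)) \<le> rho u x 0"
  unfolding rho0
  by (rule cSUP_upper) (auto intro!: bdd_aboveI[of _ "1/2"] simp: tnorm_le2 max_def)

lemma rho_le: "rho u x 0 \<le> 1/2"
  unfolding rho0 by (rule cSUP_least) (auto simp: tnorm_le2 max_def)

theorem propositionB:
  fixes u :: "nat \<Rightarrow> nat"
  assumes "strict_mono u"
    and "\<And>n. u n > 0"
    and "bdd_above (range (ratio u))"
  shows "{x::real. rho u x 0 < 1 / (2 * Qsup u)} = \<int>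
    \<and> (\<forall>x::real. {y. rho u x y < 1 / (2 * Qsup u)} = {y. y - x \<in> \<int>})"
proof -
  define Q where "Q = Qsup u"
  have rQ: "ratio u n \<le> Q" for n
    unfolding Q_def Qsup_def by (rule cSUP_upper) (use assms(3) in auto)
  have "real (u 0) \<ge> 1" using assms(2)[of 0] by simp
  hence Q1: "Q \<ge> 1" using rQ[of 0] by (simp add: ratio_def)
  have step: "real (u (Suc n)) \<le> Q * real (u n)" for n
  proof -
    have "real (u (Suc n)) / real (u n) \<le> Q" using rQ[of "Suc n"] by (simp add: ratio_def)
    moreover have "real (u n) > 0" using assms(2)[of n] by simp
    ultimately show ?thesis by (simp add: divide_le_eq mult.commute)
  qed
  have u0: "real (u 0) \<le> Q" using rQ[of 0] by (simp add: ratio_def)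
  have ugrow: "real n \<le> real (u n)" for n
    using strict_mono_imp_increasing[OF assms(1)] by simp
  have main: "rho u x 0 \<ge> 1 / (2 * Q)" if nx: "x \<notin> \<int>" for x :: real
  proof -
    define k where "k = round x"
    define t where "t = \<bar>x - of_int k\<bar>"
    have tn: "tnorm x = t" unfolding t_def k_def tnorm_def by simp
    have tpos: "t > 0"
    proof (rule ccontr)
      assume "\<not> t > 0"
      hence "x = of_int k" unfolding t_def by simp
      thus False using nx by simp
    qed
    have thalf: "t \<le> 1/2" using tn tnorm_le[of x] by simp
    show ?thesis
    proof (cases "t \<ge> 1 / (2 * Q)")
      case True
      thus ?thesis using rho_ge[of x u 0] tn by linarith
    next
      case False
      hence tsmall: "t < 1 / (2 * Q)" by simp
      have ex: "\<exists>n. real (u n) * t \<ge> 1 / (2 * Q)"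
      proof -
        obtain n :: nat where "real n > 1 / (2 * Q) / t" using reals_Archimedean2 by blast
        hence "1 / (2 * Q) / t * t < real n * t" using tpos by (rule mult_strict_right_mono)
        hence "real n * t > 1 / (2 * Q)" using tpos by simp
        moreover have "real (u n) * t \<ge> real n * t" using ugrow[of n] tpos by simp
        ultimately show ?thesis by (intro exI[of _ n]) simp
      qed
      define n where "n = (LEAST n. real (u n) * t \<ge> 1 / (2 * Q))"
      have n1: "real (u n) * t \<ge> 1 / (2 * Q)" unfolding n_def by (rule LeastI_ex[OF ex])
      have n2: "real (u n) * t < 1/2"
      proof (cases n)
        case 0
        have "real (u 0) * t \<le> Q * t" using u0 tpos by simp
        also have "\<dots> < Q * (1 / (2 * Q))" using tsmall Q1 by (intro mult_strict_left_mono) auto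
        also have "\<dots> = 1/2" using Q1 by simp
        finally show ?thesis using 0 by simp
      next
        case (Suc m)
        have "m < n" using Suc by simp
        hence "\<not> real (u m) * t \<ge> 1 / (2 * Q)" unfolding n_def by (rule not_less_Least)
        hence lt: "real (u m) * t < 1 / (2 * Q)" by simp
        have "real (u n) * t \<le> Q * real (u m) * t" using step[of m] Suc tpos by simp
        also have "\<dots> < Q * (1 / (2 * Q))" unfolding mult.assoc using lt Q1 by (intro mult_strict_left_mono) auto
        also have "\<dots> = 1/2" using Q1 by simp
        finally show ?thesis .
      qed
      have eq: "\<bar>real (u n) * x - of_int (int (u n) * k)\<bar> = real (u n) * t"
        unfolding t_def by (simp add: abs_mult right_diff_distrib[symmetric])
      have "tnorm (real (u n) * x) = real (u n) * t"
        using tnorm_small[of "real (u n) * x" "int (u n) * k"] eq n2 by simp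
      thus ?thesis using rho_ge[of x u n] n1 by linarith
    qed
  qed
  have Qpos: "1 / (2 * Q) > 0" using Q1 by simp
  have A: "{x::real. rho u x 0 < 1 / (2 * Q)} = \<int>"
  proof (intro set_eqI iffI)
    fix x assume "x \<in> {x::real. rho u x 0 < 1 / (2 * Q)}"
    thus "x \<in> \<int>" using main[of x] by (auto simp: not_le[symmetric])
  next
    fix x :: real assume xi: "x \<in> \<int>"
    have "rho u x 0 = 0"
    proof -
      have "real (u n) * x \<in> \<int>" for n using xi by simp
      hence "rho u x 0 = (SUP n::nat. 0::real)"
        unfolding rho0 using tnorm_int xi by simp
      thus ?thesis by simp
    qed
    thus "x \<in> {x::real. rho u x 0 < 1 / (2 * Q)}" using Qpos by simp
  qed
  have B: "{y. rho u x y < 1 / (2 * Q)} = {y. y - x \<in> \<int>}" for x :: real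
    using A unfolding rho_sym[of u x] by blast
  show ?thesis using A B unfolding Q_def by blast
qed

end
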